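(* The Price by Removal Mechanism is budget balanced, and it assigns all the users of $\bigcup_{m\in M}\hat P(m)$.
   Context: Model: finite sets of users $P$ (costs $c(p)\ge0$), mediators $M$ (the sets $P(m)$ partition $P$), advertisers $A$ (public capacity $u(a)$, a positive integer, and value $v(a)\ge0$); each advertiser $a$ has $u(a)$ slots each of value $v(a)$; $B$ is the set of all slots. $\gamma\ge1$ satisfies $u(a)\le\gamma$ and $|P(m)|\le\gamma$ for all $a,m$. Costs/values are compared using a fixed tie-breaking rule making them all distinct. Canonical assignment $S_c(P',B')$: order slots of $B'$ by decreasing value $b_1,b_2,\dots$ and users of $P'$ by increasing cost $p_1,p_2,\dots$; include $(p_i,b_i)$ for $i\le\min\{|P'|,|B'|\}$ iff $v(b_i)>c(p_i)$; the user at location $i$ is $p_i$. Budget balanced means the total amount charged to advertisers is at least the total amount paid to mediators. Price by Removal Mechanism (on the reported data): (1) for each mediator $m$, if $|S_c(P\setminus P(m),B)|>4\gamma$, let $p_m$ be the user at location $|S_c(P\setminus P(m),B)|-4\gamma$ of $S_c(P\setminus P(m),B)$ and $c_m=c(p_m)$, else $c_m=-\infty$; (2) $\hat P(m)$ = users of $P(m)$ with cost less than $c_m$; (3) run a VCG auction whose items are the users of $\bigcup_m\hat P(m)$ and whose bidders are the advertisers (each valuing each of up to $u(a)$ items at $v(a)$) plus a dummy advertiser of value $\max_m c_m$ and capacity $\sum_m|\hat P(m)|$; (4) charge each non-dummy advertiser her VCG payment; (5) for each user $p$ assigned (to a non-dummy advertiser) by the VCG auction, pay $c_m$ to the mediator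 $m$ of $p$. *)

theory Defs
  imports "HOL-Library.Multiset" "HOL-Library.Extended_Real"
begin

definition slots :: "'a set \<Rightarrow> ('a \<Rightarrow> nat) \<Rightarrow> ('a \<times> nat) set" where
  "slots A u = {(a, j). a \<in> A \<and> j < u a}"

definition slot_vals :: "'a set \<Rightarrow> ('a \<Rightarrow> nat) \<Rightarrow> ('a \<Rightarrow> real) \<Rightarrow> real list" where
  "slot_vals A u v =
     rev (sorted_list_of_multiset (image_mset (\<lambda>(a, j). v a) (mset_set (slots A u))))"

text \<open>The user at (0-based) position i when the users of P' are sorted by increasing cost
  (costs are distinct).  Location k in the paper (1-based) is index k - 1 here.\<close>
definition canon_user :: "('p \<Rightarrow> real) \<Rightarrow> 'p set \<Rightarrow> nat \<Rightarrow> 'p" where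
  "canon_user c P' i = (THE p. p \<in> P' \<and> card {q \<in> P'. c q < c p} = i)"

text \<open>Canonical assignment S_c(P', B') given the decreasing list vs of slot values of B':
  pairs (location index, user) included iff the slot value exceeds the user's cost.\<close>
definition canonical :: "('p \<Rightarrow> real) \<Rightarrow> 'p set \<Rightarrow> real list \<Rightarrow> (nat \<times> 'p) set" where
  "canonical c P' vs =
     {(i, canon_user c P' i) | i. i < min (card P') (length vs) \<and> c (canon_user c P' i) < vs ! i}"

definition feasible :: "'p set \<Rightarrow> 'b set \<Rightarrow> ('b \<Rightarrow> nat) \<Rightarrow> ('p \<Rightarrow> 'b option) \<Rightarrow> bool" where
  "feasible I Bd cap f \<longleftrightarrow>
     (\<forall>p. p \<notin> I \<longrightarrow> f p = None) \<and>
     (\<forall>p \<in> I. \<forall>b. f p = Some b \<longrightarrow> b \<in> Bd) \<and>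
     (\<forall>b \<in> Bd. card {p \<in> I. f p = Some b} \<le> cap b)"

definition welfare :: "'p set \<Rightarrow> ('b \<Rightarrow> real) \<Rightarrow> ('p \<Rightarrow> 'b option) \<Rightarrow> real" where
  "welfare I val f = (\<Sum>p\<in>I. case f p of None \<Rightarrow> 0 | Some b \<Rightarrow> val b)"

definition opt_welfare :: "'p set \<Rightarrow> 'b set \<Rightarrow> ('b \<Rightarrow> nat) \<Rightarrow> ('b \<Rightarrow> real) \<Rightarrow> real" where
  "opt_welfare I Bd cap val = Max (welfare I val ` {f. feasible I Bd cap f})"

definition vcg_alloc :: "'p set \<Rightarrow> 'b set \<Rightarrow> ('b \<Rightarrow> nat) \<Rightarrow> ('b \<Rightarrow> real) \<Rightarrow> ('p \<Rightarrow> 'b option) \<Rightarrow> bool" where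
  "vcg_alloc I Bd cap val f \<longleftrightarrow> feasible I Bd cap f \<and> welfare I val f = opt_welfare I Bd cap val"

definition vcg_payment :: "'p set \<Rightarrow> 'b set \<Rightarrow> ('b \<Rightarrow> nat) \<Rightarrow> ('b \<Rightarrow> real) \<Rightarrow> ('p \<Rightarrow> 'b option) \<Rightarrow> 'b \<Rightarrow> real" where
  "vcg_payment I Bd cap val f b =
     opt_welfare I (Bd - {b}) cap val
     - (welfare I val f - real (card {p \<in> I. f p = Some b}) * val b)"

definition thr :: "('p \<Rightarrow> real) \<Rightarrow> 'p set \<Rightarrow> ('m \<Rightarrow> 'p set) \<Rightarrow> 'a set \<Rightarrow> ('a \<Rightarrow> nat) \<Rightarrow> ('a \<Rightarrow> real)
                   \<Rightarrow> nat \<Rightarrow> 'm \<Rightarrow> ereal" where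
  "thr c P Pm A u v \<gamma> m =
     (let S = canonical c (P - Pm m) (slot_vals A u v) in
      if card S > 4 * \<gamma>
      then ereal (c (canon_user c (P - Pm m) (card S - 4 * \<gamma> - 1)))
      else -\<infinity>)"

definition phat :: "('p \<Rightarrow> real) \<Rightarrow> 'p set \<Rightarrow> ('m \<Rightarrow> 'p set) \<Rightarrow> 'a set \<Rightarrow> ('a \<Rightarrow> nat) \<Rightarrow> ('a \<Rightarrow> real)
                   \<Rightarrow> nat \<Rightarrow> 'm \<Rightarrow> 'p set" where
  "phat c P Pm A u v \<gamma> m = {p \<in> Pm m. ereal (c p) < thr c P Pm A u v \<gamma> m}"

text \<open>Step (3): the VCG auction. Bidders are Inl a (advertisers) and Inr () (dummy).\<close>
definition items :: "('p \<Rightarrow> real) \<Rightarrow> 'p set \<Rightarrow> 'm set \<Rightarrow> ('m \<Rightarrow> 'p set) \<Rightarrow> 'a set \<Rightarrow> ('a \<Rightarrow> nat)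
                   \<Rightarrow> ('a \<Rightarrow> real) \<Rightarrow> nat \<Rightarrow> 'p set" where
  "items c P M Pm A u v \<gamma> = (\<Union>m\<in>M. phat c P Pm A u v \<gamma> m)"

definition bidders :: "'a set \<Rightarrow> ('a + unit) set" where
  "bidders A = Inl ` A \<union> {Inr ()}"

definition bid_cap :: "('p \<Rightarrow> real) \<Rightarrow> 'p set \<Rightarrow> 'm set \<Rightarrow> ('m \<Rightarrow> 'p set) \<Rightarrow> 'a set \<Rightarrow> ('a \<Rightarrow> nat)
                   \<Rightarrow> ('a \<Rightarrow> real) \<Rightarrow> nat \<Rightarrow> 'a + unit \<Rightarrow> nat" where
  "bid_cap c P M Pm A u v \<gamma> b =
     (case b of Inl a \<Rightarrow> u a | Inr _ \<Rightarrow> (\<Sum>m\<in>M. card (phat c P Pm A u v \<gamma> m)))"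

text \<open>The dummy's value is max_m c_m (taken as a supremum in ereal; it is -\<infinity> only when all
  c_m = -\<infinity>, in which case there are no items and the dummy's value is irrelevant).\<close>
definition bid_val :: "('p \<Rightarrow> real) \<Rightarrow> 'p set \<Rightarrow> 'm set \<Rightarrow> ('m \<Rightarrow> 'p set) \<Rightarrow> 'a set \<Rightarrow> ('a \<Rightarrow> nat)
                   \<Rightarrow> ('a \<Rightarrow> real) \<Rightarrow> nat \<Rightarrow> 'a + unit \<Rightarrow> real" where
  "bid_val c P M Pm A u v \<gamma> b =
     (case b of Inl a \<Rightarrow> v a | Inr _ \<Rightarrow> real_of_ereal (SUP m\<in>M. thr c P Pm A u v \<gamma> m))"

definition total_charged :: "('p \<Rightarrow> real) \<Rightarrow> 'p set \<Rightarrow> 'm set \<Rightarrow> ('m \<Rightarrow> 'p set) \<Rightarrow> 'a set \<Rightarrow> ('a \<Rightarrow> nat)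
                   \<Rightarrow> ('a \<Rightarrow> real) \<Rightarrow> nat \<Rightarrow> ('p \<Rightarrow> ('a + unit) option) \<Rightarrow> real" where
  "total_charged c P M Pm A u v \<gamma> f =
     (\<Sum>a\<in>A. vcg_payment (items c P M Pm A u v \<gamma>) (bidders A) (bid_cap c P M Pm A u v \<gamma>)
                          (bid_val c P M Pm A u v \<gamma>) f (Inl a))"

definition total_paid :: "('p \<Rightarrow> real) \<Rightarrow> 'p set \<Rightarrow> 'm set \<Rightarrow> ('m \<Rightarrow> 'p set) \<Rightarrow> 'a set \<Rightarrow> ('a \<Rightarrow> nat)
                   \<Rightarrow> ('a \<Rightarrow> real) \<Rightarrow> nat \<Rightarrow> ('p \<Rightarrow> ('a + unit) option) \<Rightarrow> real" where
  "total_paid c P M Pm A u v \<gamma> f =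
     (\<Sum>m\<in>M. real (card {p \<in> phat c P Pm A u v \<gamma> m. \<exists>a \<in> A. f p = Some (Inl a)})
              * real_of_ereal (thr c P Pm A u v \<gamma> m))"

end

theory Submission imports Defs begin

lemma cnt_lt_strict:
  assumes "finite P'" "p \<in> P'" "p' \<in> P'" "c p < (c p' :: real)"
  shows "card {q\<in>P'. c q < c p} < card {q\<in>P'. c q < c p'}"
proof (rule psubset_card_mono)
  show "finite {q\<in>P'. c q < c p'}" using assms by simp
  show "{q\<in>P'. c q < c p} \<subset> {q\<in>P'. c q < c p'}" using assms by auto
qed

lemma cu_props:
  assumes fin: "finite P'" and inj: "inj_on c P'" and i: "i < card P'"
  shows "canon_user c P' i \<in> P' \<and> card {q\<in>P'. c q < c (canon_user c P' i)} = i"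
proof -
  define g where "g p = card {q\<in>P'. c q < c p}" for p
  have ginj: "inj_on g P'"
  proof (rule inj_onI)
    fix x y assume xy: "x \<in> P'" "y \<in> P'" "g x = g y"
    show "x = y"
    proof (rule ccontr)
      assume "x \<noteq> y"
      then have "c x \<noteq> c y" using inj xy by (meson inj_on_def)
      then show False using cnt_lt_strict[OF fin, of x y c] cnt_lt_strict[OF fin, of y x c] xy
        unfolding g_def by (cases "c x < c y") auto
    qed
  qed
  have sub: "g ` P' \<subseteq> {..<card P'}"
  proof
    fix n assume "n \<in> g ` P'"
    then obtain p where p: "p \<in> P'" "n = g p" by auto
    have "{q\<in>P'. c q < c p} \<subset> P'" using p by auto
    then show "n \<in> {..<card P'}" using p fin unfolding g_def by (simp add: psubset_card_mono)
  qed
  have "card (g ` P') = card {..<card P'}" using card_image[OF ginj] by simp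
  then have "g ` P' = {..<card P'}" using card_subset_eq[OF _ sub] by simp
  then obtain p where p: "p \<in> P'" "g p = i" using i by (metis imageE lessThan_iff)
  have "canon_user c P' i = p"
    unfolding canon_user_def
  proof (rule the_equality)
    show "p \<in> P' \<and> card {q \<in> P'. c q < c p} = i" using p g_def by auto
    fix x assume "x \<in> P' \<and> card {q \<in> P'. c q < c x} = i"
    then show "x = p" using p ginj unfolding g_def inj_on_def by metis
  qed
  then show ?thesis using p g_def by auto
qed

lemma cu_mono:
  assumes fin: "finite P'" and inj: "inj_on c P'" and ij: "i \<le> j" "j < card P'"
  shows "c (canon_user c P' i) \<le> c (canon_user c P' j)"
proof (rule ccontr)
  assume "\<not> ?thesis"
  then have "c (canon_user c P' j) < c (canon_user c P' i)" by simp
  from cnt_lt_strict[OF fin _ _ this] cu_props[OF fin inj, of i] cu_props[OF fin inj, of j] ij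
  show False by auto
qed


lemma slot_vals_sorted:
  assumes "i \<le> j" "j < length (slot_vals A u v)"
  shows "slot_vals A u v ! j \<le> slot_vals A u v ! i"
proof -
  define xs where "xs = sorted_list_of_multiset (image_mset (\<lambda>(a, j). v a) (mset_set (slots A u)))"
  have s: "sorted xs" unfolding xs_def by simp
  have vs: "slot_vals A u v = rev xs" unfolding slot_vals_def xs_def by simp
  have l: "j < length xs" using assms vs by simp
  have "rev xs ! j = xs ! (length xs - Suc j)" "rev xs ! i = xs ! (length xs - Suc i)"
    using l assms by (simp_all add: rev_nth)
  moreover have "xs ! (length xs - Suc j) \<le> xs ! (length xs - Suc i)"
    using s l assms by (intro sorted_nth_mono) auto
  ultimately show ?thesis using vs by simp
qed

lemma slot_vals_count:
  assumes "finite A"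
  shows "card {i. i < length (slot_vals A u v) \<and> D < slot_vals A u v ! i}
         = (\<Sum>a\<in>{a\<in>A. D < v a}. u a)"
proof -
  have fs: "finite (slots A u)"
  proof -
    have "slots A u \<subseteq> A \<times> {..<Max (insert 0 (u ` A)) + 1}"
      unfolding slots_def using assms
      by (auto simp: less_Suc_eq_le intro!: order.trans[OF _ Max_ge] dest!: less_imp_le)
    then show ?thesis using assms finite_subset by blast
  qed
  have "card {i. i < length (slot_vals A u v) \<and> D < slot_vals A u v ! i}
      = length (filter (\<lambda>x. D < x) (slot_vals A u v))"
    by (simp add: length_filter_conv_card)
  also have "\<dots> = size (mset (filter (\<lambda>x. D < x) (slot_vals A u v)))" by (simp only: size_mset)
  also have "\<dots> = size (filter_mset (\<lambda>x. D < x) (image_mset (\<lambda>(a, j). v a) (mset_set (slots A u))))"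
    unfolding slot_vals_def by (simp only: mset_filter mset_rev mset_sorted_list_of_multiset)
  also have "\<dots> = card {s \<in> slots A u. D < (\<lambda>(a, j). v a) s}"
    using fs by (simp add: filter_mset_image_mset)
  also have "{s \<in> slots A u. D < (\<lambda>(a, j). v a) s} = (SIGMA a:{a\<in>A. D < v a}. {..<u a})"
    unfolding slots_def by auto
  also have "card \<dots> = (\<Sum>a\<in>{a\<in>A. D < v a}. u a)" using assms by simp
  finally show ?thesis .
qed


lemma canon_key:
  assumes fin: "finite P'" and inj: "inj_on c P'"
    and k: "card (canonical c P' (slot_vals A u v)) = k" and kg: "g < k"
  shows "canon_user c P' (k-g-1) \<in> P'
       \<and> card {q\<in>P'. c q < c (canon_user c P' (k-g-1))} = k-g-1
       \<and> k \<le> card {i. i < length (slot_vals A u v) \<and> c (canon_user c P' (k-g-1)) < slot_vals A u v ! i}"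
proof -
  define vs where "vs = slot_vals A u v"
  define J where "J = {i. i < min (card P') (length vs) \<and> c (canon_user c P' i) < vs ! i}"
  have can: "canonical c P' vs = (\<lambda>i. (i, canon_user c P' i)) ` J"
    unfolding canonical_def J_def by auto
  have finJ: "finite J" unfolding J_def by simp
  have "card J = k" using k can card_image[of "\<lambda>i. (i, canon_user c P' i)" J]
    unfolding vs_def by (simp add: inj_on_def)
  then have Jne: "J \<noteq> {}" using kg by auto
  define j where "j = Max J"
  have jJ: "j \<in> J" using finJ Jne j_def by simp
  have "J \<subseteq> {..j}" using finJ j_def by auto
  then have "k \<le> Suc j" using \<open>card J = k\<close> card_mono[of "{..j}" J] by simp
  have jlt: "j < card P'" "j < length vs" and jv: "c (canon_user c P' j) < vs ! j"
    using jJ unfolding J_def by auto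
  have le: "k-g-1 \<le> j" using \<open>k \<le> Suc j\<close> by simp
  define D where "D = c (canon_user c P' (k-g-1))"
  have "D \<le> c (canon_user c P' j)" unfolding D_def by (rule cu_mono[OF fin inj le jlt(1)])
  have "{..j} \<subseteq> {i. i < length vs \<and> D < vs ! i}"
  proof
    fix i assume "i \<in> {..j}"
    then have "i \<le> j" by simp
    then have "vs ! j \<le> vs ! i" using slot_vals_sorted[of i j A u v] jlt unfolding vs_def by simp
    then show "i \<in> {i. i < length vs \<and> D < vs ! i}"
      using \<open>i \<le> j\<close> jlt jv \<open>D \<le> c (canon_user c P' j)\<close> by auto
  qed
  then have "Suc j \<le> card {i. i < length vs \<and> D < vs ! i}"
    using card_mono[of "{i. i < length vs \<and> D < vs ! i}" "{..j}"] by simp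
  moreover have "k-g-1 < card P'" using le jlt by simp
  ultimately show ?thesis using cu_props[OF fin inj, of "k-g-1"] \<open>k \<le> Suc j\<close>
    unfolding D_def vs_def by simp
qed


lemma thr_not_pinf: "thr c P Pm A u v \<gamma> m \<noteq> \<infinity>"
  unfolding thr_def Let_def by auto

lemma key_count:
  assumes finP: "finite P" and finM: "finite M" and finA: "finite A"
    and c0: "\<forall>p\<in>P. c p \<ge> 0"
    and sub: "\<forall>m\<in>M. Pm m \<subseteq> P"
    and cardPm: "\<forall>m\<in>M. card (Pm m) \<le> \<gamma>"
    and inj: "inj_on c P"
    and ne: "items c P M Pm A u v \<gamma> \<noteq> {}"
  shows "0 \<le> real_of_ereal (SUP m\<in>M. thr c P Pm A u v \<gamma> m)
    \<and> (SUP m\<in>M. thr c P Pm A u v \<gamma> m) = ereal (real_of_ereal (SUP m\<in>M. thr c P Pm A u v \<gamma> m))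
    \<and> card (items c P M Pm A u v \<gamma>)
        \<le> (\<Sum>a\<in>{a\<in>A. real_of_ereal (SUP m\<in>M. thr c P Pm A u v \<gamma> m) < v a}. u a)"
proof -
  let ?t = "thr c P Pm A u v \<gamma>"
  let ?I = "items c P M Pm A u v \<gamma>"
  obtain m0 p0 where m0: "m0 \<in> M" "p0 \<in> phat c P Pm A u v \<gamma> m0"
    using ne unfolding items_def by auto
  have t0: "?t m0 \<noteq> -\<infinity>" using m0 unfolding phat_def by auto
  have Mne: "M \<noteq> {}" using m0 by auto
  have "(SUP m\<in>M. ?t m) = Max (?t ` M)" using Max_Sup[of "?t ` M"] finM Mne by simp
  moreover have "Max (?t ` M) \<in> ?t ` M" using Max_in[of "?t ` M"] finM Mne by simp
  ultimately obtain ms where ms: "ms \<in> M" "(SUP m\<in>M. ?t m) = ?t ms"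
    by (metis imageE)
  have "?t m0 \<le> ?t ms" using ms m0 by (metis SUP_upper)
  then have tms: "?t ms \<noteq> -\<infinity>" using t0 by auto
  define P' where "P' = P - Pm ms"
  define k where "k = card (canonical c P' (slot_vals A u v))"
  have kg: "4 * \<gamma> < k" and tv: "?t ms = ereal (c (canon_user c P' (k - 4*\<gamma> - 1)))"
    using tms unfolding thr_def Let_def k_def P'_def by (auto split: if_splits)
  define D where "D = c (canon_user c P' (k - 4*\<gamma> - 1))"
  have finP': "finite P'" using finP P'_def by simp
  have injP': "inj_on c P'" using inj P'_def by (auto intro: inj_on_subset)
  have ck: "canon_user c P' (k-4*\<gamma>-1) \<in> P'
       \<and> card {q\<in>P'. c q < D} = k-4*\<gamma>-1
       \<and> k \<le> card {i. i < length (slot_vals A u v) \<and> D < slot_vals A u v ! i}"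
    using canon_key[OF finP' injP' k_def[symmetric] kg] unfolding D_def by simp
  have Deq: "(SUP m\<in>M. ?t m) = ereal D" using ms tv D_def by simp
  have D0: "0 \<le> D" using ck c0 unfolding D_def P'_def by auto
  have "?I \<subseteq> {q\<in>P'. c q < D} \<union> Pm ms"
  proof
    fix p assume "p \<in> ?I"
    then obtain m where m: "m \<in> M" "p \<in> Pm m" "ereal (c p) < ?t m"
      unfolding items_def phat_def by auto
    have "?t m \<le> ereal D" using m(1) Deq by (metis SUP_upper)
    then have "ereal (c p) < ereal D" using m(3) by (rule order.strict_trans2[rotated])
    then have "c p < D" by simp
    then show "p \<in> {q\<in>P'. c q < D} \<union> Pm ms" using m sub unfolding P'_def by auto
  qed
  then have "card ?I \<le> card ({q\<in>P'. c q < D} \<union> Pm ms)"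
    by (rule card_mono[rotated]) (use finP' finP sub ms in \<open>auto intro: finite_subset\<close>)
  also have "\<dots> \<le> card {q\<in>P'. c q < D} + card (Pm ms)" by (rule card_Un_le)
  also have "\<dots> \<le> k" using ck cardPm ms kg by auto
  also have "\<dots> \<le> (\<Sum>a\<in>{a\<in>A. D < v a}. u a)" using ck slot_vals_count[OF finA] by metis
  finally show ?thesis using Deq D0 by simp
qed


lemma finite_feasible:
  assumes "finite I" "finite Bd"
  shows "finite {f. feasible I Bd cap f}"
proof -
  have "{f. feasible I Bd cap f} \<subseteq>
        {f. \<forall>x. (x \<in> I \<longrightarrow> f x \<in> insert None (Some ` Bd)) \<and> (x \<notin> I \<longrightarrow> f x = None)}"
  proof (intro subsetI CollectI allI conjI impI)
    fix f x assume fe: "f \<in> {f. feasible I Bd cap f}"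
    show "x \<notin> I \<Longrightarrow> f x = None" using fe unfolding feasible_def by auto
    show "x \<in> I \<Longrightarrow> f x \<in> insert None (Some ` Bd)" using fe unfolding feasible_def
      by (cases "f x") auto
  qed
  moreover have "finite {f. \<forall>x. (x \<in> I \<longrightarrow> f x \<in> insert None (Some ` Bd)) \<and> (x \<notin> I \<longrightarrow> f x = None)}"
    using assms by (intro finite_set_of_finite_funs) auto
  ultimately show ?thesis by (rule finite_subset)
qed

lemma welfare_le_opt:
  assumes "finite I" "finite Bd" "feasible I Bd cap g"
  shows "welfare I val g \<le> opt_welfare I Bd cap val"
  unfolding opt_welfare_def
  using assms finite_feasible[OF assms(1,2), of cap] by (intro Max_ge) auto

lemma finite_bidders: "finite A \<Longrightarrow> finite (bidders A)"
  unfolding bidders_def by simp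

lemma all_assigned:
  assumes finI: "finite I" and finA: "finite A"
    and vcg: "vcg_alloc I (bidders A) cap val f"
    and capA: "\<forall>a\<in>A. cap (Inl a) = u a" and valA: "\<forall>a\<in>A. val (Inl a) = v a"
    and D0: "0 \<le> val (Inr ())"
    and cnt: "card I \<le> (\<Sum>a\<in>{a\<in>A. val (Inr ()) < v a}. u a)"
  shows "\<forall>p\<in>I. \<exists>a\<in>A. f p = Some (Inl a)"
proof (rule ccontr)
  assume "\<not> ?thesis"
  then obtain p where p: "p \<in> I" "\<not> (\<exists>a\<in>A. f p = Some (Inl a))" by auto
  define D where "D = val (Inr ())"
  define H where "H = {a\<in>A. D < v a}"
  have finH: "finite H" using finA H_def by simp
  have feas: "feasible I (bidders A) cap f" and opt: "welfare I val f = opt_welfare I (bidders A) cap val"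
    using vcg unfolding vcg_alloc_def by auto
  have U: "{q\<in>I. \<exists>a\<in>H. f q = Some (Inl a)} = (\<Union>a\<in>H. {q\<in>I. f q = Some (Inl a)})" by auto
  have "card {q\<in>I. \<exists>a\<in>H. f q = Some (Inl a)} = (\<Sum>a\<in>H. card {q\<in>I. f q = Some (Inl a)})"
    unfolding U using finH finI by (intro card_UN_disjoint) auto
  moreover have "{q\<in>I. \<exists>a\<in>H. f q = Some (Inl a)} \<subseteq> I - {p}" using p H_def by auto
  then have "card {q\<in>I. \<exists>a\<in>H. f q = Some (Inl a)} < card I"
  proof -
    have "card {q\<in>I. \<exists>a\<in>H. f q = Some (Inl a)} \<le> card (I - {p})"
      using finI \<open>_ \<subseteq> I - {p}\<close> by (intro card_mono) auto
    then show ?thesis using card_Diff1_less[OF finI p(1)] by simp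
  qed
  ultimately have "(\<Sum>a\<in>H. card {q\<in>I. f q = Some (Inl a)}) < (\<Sum>a\<in>H. u a)"
    using cnt H_def D_def by simp
  have "\<exists>a\<in>H. card {q\<in>I. f q = Some (Inl a)} < u a"
  proof (rule ccontr)
    assume "\<not> ?thesis"
    then have "\<forall>a\<in>H. u a \<le> card {q\<in>I. f q = Some (Inl a)}" by (simp add: not_less)
    then have "(\<Sum>a\<in>H. u a) \<le> (\<Sum>a\<in>H. card {q\<in>I. f q = Some (Inl a)})" by (intro sum_mono) auto
    then show False using \<open>(\<Sum>a\<in>H. card {q\<in>I. f q = Some (Inl a)}) < (\<Sum>a\<in>H. u a)\<close> by simp
  qed
  then obtain a where a: "a \<in> H" "card {q\<in>I. f q = Some (Inl a)} < u a" by blast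
  have aA: "a \<in> A" and va: "D < v a" using a H_def by auto
  define g where "g = f(p := Some (Inl a))"
  have feasg: "feasible I (bidders A) cap g"
    unfolding feasible_def
  proof (intro conjI allI ballI impI)
    fix q assume "q \<notin> I" then show "g q = None" using feas p unfolding feasible_def g_def by auto
  next
    fix q b assume "q \<in> I" "g q = Some b" then show "b \<in> bidders A"
      using feas aA unfolding feasible_def g_def bidders_def by (auto split: if_splits)
  next
    fix b assume b: "b \<in> bidders A"
    show "card {q \<in> I. g q = Some b} \<le> cap b"
    proof (cases "b = Inl a")
      case True
      have "{q \<in> I. g q = Some b} \<subseteq> insert p {q\<in>I. f q = Some (Inl a)}"
        using True unfolding g_def by auto
      then have "card {q \<in> I. g q = Some b} \<le> Suc (card {q\<in>I. f q = Some (Inl a)})"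
      proof -
        have "card {q \<in> I. g q = Some b} \<le> card (insert p {q\<in>I. f q = Some (Inl a)})"
          using finI \<open>{q \<in> I. g q = Some b} \<subseteq> _\<close> by (intro card_mono) auto
        also have "\<dots> \<le> Suc (card {q\<in>I. f q = Some (Inl a)})" using finI by (simp add: card_insert_if)
        finally show ?thesis .
      qed
      then show ?thesis using a True capA aA by simp
    next
      case False
      have "{q \<in> I. g q = Some b} \<subseteq> {q\<in>I. f q = Some b}" using False unfolding g_def by auto
      then have "card {q \<in> I. g q = Some b} \<le> card {q\<in>I. f q = Some b}"
        using finI by (intro card_mono) auto
      then show ?thesis using feas b unfolding feasible_def by fastforce
    qed
  qed
  let ?w = "\<lambda>h q. case h q of None \<Rightarrow> 0 | Some b \<Rightarrow> val b"
  have fp: "?w f p \<le> D"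
  proof (cases "f p")
    case None then show ?thesis using D0 D_def by simp
  next
    case (Some b)
    then have "b \<in> bidders A" using feas p unfolding feasible_def by auto
    then have "b = Inr ()" using p Some unfolding bidders_def by auto
    then show ?thesis using Some D_def by simp
  qed
  have "welfare I val g = ?w g p + (\<Sum>q\<in>I - {p}. ?w g q)"
    unfolding welfare_def using finI p by (simp add: sum.remove)
  also have "(\<Sum>q\<in>I - {p}. ?w g q) = (\<Sum>q\<in>I - {p}. ?w f q)"
    unfolding g_def by (intro sum.cong) auto
  also have "?w g p = v a" using valA aA unfolding g_def by simp
  finally have "welfare I val g = v a + (\<Sum>q\<in>I - {p}. ?w f q)" .
  moreover have "welfare I val f = ?w f p + (\<Sum>q\<in>I - {p}. ?w f q)"
    unfolding welfare_def using finI p by (simp add: sum.remove)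
  ultimately have "welfare I val f < welfare I val g" using fp va by simp
  moreover have "welfare I val g \<le> welfare I val f"
    using welfare_le_opt[OF finI finite_bidders[OF finA] feasg] opt by simp
  ultimately show False by simp
qed

lemma payment_ge:
  assumes finI: "finite I" and finA: "finite A" and aA: "a \<in> A"
    and vcg: "vcg_alloc I (bidders A) cap val f"
    and capD: "card I \<le> cap (Inr ())"
    and assigned: "\<forall>p\<in>I. \<exists>a\<in>A. f p = Some (Inl a)"
  shows "real (card {q\<in>I. f q = Some (Inl a)}) * val (Inr ()) \<le> vcg_payment I (bidders A) cap val f (Inl a)"
proof -
  define D where "D = val (Inr ())"
  define n where "n = card {q\<in>I. f q = Some (Inl a)}"
  have feas: "feasible I (bidders A) cap f"
    using vcg unfolding vcg_alloc_def by auto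
  define g where "g q = (if f q = Some (Inl a) then Some (Inr ()) else f q)" for q
  have feasg: "feasible I (bidders A - {Inl a}) cap g"
    unfolding feasible_def
  proof (intro conjI allI ballI impI)
    fix q assume "q \<notin> I" then show "g q = None" using feas unfolding feasible_def g_def by auto
  next
    fix q b assume "q \<in> I" "g q = Some b" then show "b \<in> bidders A - {Inl a}"
      using feas unfolding feasible_def g_def bidders_def by (auto split: if_splits)
  next
    fix b assume b: "b \<in> bidders A - {Inl a}"
    show "card {q \<in> I. g q = Some b} \<le> cap b"
    proof (cases "b = Inr ()")
      case True
      have "card {q \<in> I. g q = Some b} \<le> card I" using finI by (intro card_mono) auto
      then show ?thesis using capD True by simp
    next
      case False
      have "{q \<in> I. g q = Some b} = {q\<in>I. f q = Some b}" using False b unfolding g_def by auto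
      then show ?thesis using feas b unfolding feasible_def by fastforce
    qed
  qed
  let ?w = "\<lambda>h q. case h q of None \<Rightarrow> 0 | Some b \<Rightarrow> val b"
  have "welfare I val g = (\<Sum>q\<in>I. ?w f q + (if f q = Some (Inl a) then D - val (Inl a) else 0))"
    unfolding welfare_def g_def D_def by (intro sum.cong) auto
  also have "\<dots> = welfare I val f + (\<Sum>q\<in>I. if f q = Some (Inl a) then D - val (Inl a) else 0)"
    unfolding welfare_def by (simp add: sum.distrib)
  also have "(\<Sum>q\<in>I. if f q = Some (Inl a) then D - val (Inl a) else 0) = real n * (D - val (Inl a))"
    using finI unfolding n_def by (simp add: sum.inter_filter[symmetric])
  finally have "welfare I val g = welfare I val f + real n * (D - val (Inl a))" .
  moreover have "welfare I val g \<le> opt_welfare I (bidders A - {Inl a}) cap val"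
    using welfare_le_opt[OF finI _ feasg] finite_bidders[OF finA] by simp
  ultimately show ?thesis unfolding vcg_payment_def n_def D_def by (simp add: algebra_simps)
qed


theorem corollary7:
  fixes P :: "'p set" and M :: "'m set" and A :: "'a set"
    and c :: "'p \<Rightarrow> real" and Pm :: "'m \<Rightarrow> 'p set"
    and u :: "'a \<Rightarrow> nat" and v :: "'a \<Rightarrow> real" and \<gamma> :: nat
    and f :: "'p \<Rightarrow> ('a + unit) option"
  assumes "finite P" and "finite M" and "finite A"
    and "\<forall>p\<in>P. c p \<ge> 0" and "\<forall>a\<in>A. v a \<ge> 0"
    and "\<forall>m\<in>M. Pm m \<noteq> {} \<and> Pm m \<subseteq> P"
    and "\<forall>m1\<in>M. \<forall>m2\<in>M. m1 \<noteq> m2 \<longrightarrow> Pm m1 \<inter> Pm m2 = {}"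
    and "(\<Union>m\<in>M. Pm m) = P"
    and "\<forall>a\<in>A. 0 < u a"
    and "\<gamma> \<ge> 1" and "\<forall>a\<in>A. u a \<le> \<gamma>" and "\<forall>m\<in>M. card (Pm m) \<le> \<gamma>"
    and "inj_on c P" and "inj_on v A" and "\<forall>p\<in>P. \<forall>a\<in>A. c p \<noteq> v a"
    and "vcg_alloc (items c P M Pm A u v \<gamma>) (bidders A) (bid_cap c P M Pm A u v \<gamma>)
                   (bid_val c P M Pm A u v \<gamma>) f"
  shows "total_charged c P M Pm A u v \<gamma> f \<ge> total_paid c P M Pm A u v \<gamma> f
         \<and> (\<forall>p \<in> items c P M Pm A u v \<gamma>. \<exists>a \<in> A. f p = Some (Inl a))"
proof -
  note finP = assms(1) and finM = assms(2) and finA = assms(3) and c0 = assms(4)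
    and PmP = assms(6) and disj = assms(7) and cardPm = assms(12) and inj = assms(13)
    and vcg = assms(16)
  let ?I = "items c P M Pm A u v \<gamma>"
  let ?ph = "phat c P Pm A u v \<gamma>"
  let ?t = "thr c P Pm A u v \<gamma>"
  let ?cap = "bid_cap c P M Pm A u v \<gamma>"
  let ?val = "bid_val c P M Pm A u v \<gamma>"
  define D where "D = real_of_ereal (SUP m\<in>M. ?t m)"
  have valD: "?val (Inr ()) = D" unfolding bid_val_def D_def by simp
  have phsub: "?ph m \<subseteq> Pm m" for m unfolding phat_def by auto
  have finI: "finite ?I" unfolding items_def using finM finP PmP phsub
    by (meson UN_least finite_subset order_trans)
  have finph: "finite (?ph m)" if "m \<in> M" for m
    using that finP PmP phsub by (meson finite_subset order_trans)
  have cardI: "card ?I = (\<Sum>m\<in>M. card (?ph m))"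
    unfolding items_def using finM finph phsub disj
    by (intro card_UN_disjoint) (auto, blast)
  have capD: "?cap (Inr ()) = card ?I" unfolding bid_cap_def cardI by simp
  have capA: "\<forall>a\<in>A. ?cap (Inl a) = u a" unfolding bid_cap_def by simp
  have valA: "\<forall>a\<in>A. ?val (Inl a) = v a" unfolding bid_val_def by simp
  have sub: "\<forall>m\<in>M. Pm m \<subseteq> P" using PmP by auto
  have assigned: "\<forall>p\<in>?I. \<exists>a\<in>A. f p = Some (Inl a)"
  proof (cases "?I = {}")
    case True then show ?thesis by simp
  next
    case False
    from key_count[OF finP finM finA c0 sub cardPm inj False]
    have "0 \<le> D" "card ?I \<le> (\<Sum>a\<in>{a\<in>A. D < v a}. u a)" unfolding D_def by auto
    then show ?thesis using all_assigned[OF finI finA vcg capA valA] valD by simp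
  qed
  have charged: "real (card ?I) * D \<le> total_charged c P M Pm A u v \<gamma> f"
  proof -
    have U: "?I = (\<Union>a\<in>A. {q\<in>?I. f q = Some (Inl a)})" using assigned by auto
    have "card ?I = (\<Sum>a\<in>A. card {q\<in>?I. f q = Some (Inl a)})"
      using finA finI by (subst U) (intro card_UN_disjoint, auto)
    then have "real (card ?I) * D = (\<Sum>a\<in>A. real (card {q\<in>?I. f q = Some (Inl a)}) * ?val (Inr ()))"
      using valD by (simp add: sum_distrib_right)
    also have "\<dots> \<le> total_charged c P M Pm A u v \<gamma> f"
      unfolding total_charged_def
      using payment_ge[OF finI finA _ vcg _ assigned] capD by (intro sum_mono) auto
    finally show ?thesis .
  qed
  have paid: "total_paid c P M Pm A u v \<gamma> f \<le> real (card ?I) * D"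
  proof -
    have "total_paid c P M Pm A u v \<gamma> f = (\<Sum>m\<in>M. real (card (?ph m)) * real_of_ereal (?t m))"
      unfolding total_paid_def
    proof (intro sum.cong refl)
      fix m assume "m \<in> M"
      then have "{p \<in> ?ph m. \<exists>a\<in>A. f p = Some (Inl a)} = ?ph m"
        using assigned unfolding items_def by auto
      then show "real (card {p \<in> ?ph m. \<exists>a\<in>A. f p = Some (Inl a)}) * real_of_ereal (?t m)
          = real (card (?ph m)) * real_of_ereal (?t m)" by simp
    qed
    also have "\<dots> \<le> (\<Sum>m\<in>M. real (card (?ph m)) * D)"
    proof (intro sum_mono)
      fix m assume m: "m \<in> M"
      show "real (card (?ph m)) * real_of_ereal (?t m) \<le> real (card (?ph m)) * D"
      proof (cases "?ph m = {}")
        case True then show ?thesis by simp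
      next
        case False
        then obtain p where p: "p \<in> ?ph m" by auto
        then have Ine: "?I \<noteq> {}" using m unfolding items_def by auto
        have Deq: "(SUP m\<in>M. ?t m) = ereal D"
          using key_count[OF finP finM finA c0 sub cardPm inj Ine] unfolding D_def by auto
        have "?t m \<le> ereal D" using m Deq by (metis SUP_upper)
        moreover have "?t m \<noteq> -\<infinity>" using p unfolding phat_def by auto
        moreover have "?t m \<noteq> \<infinity>" by (rule thr_not_pinf)
        ultimately have "real_of_ereal (?t m) \<le> D"
          by (cases "?t m") auto
        then show ?thesis by (intro mult_left_mono) auto
      qed
    qed
    also have "\<dots> = real (card ?I) * D" unfolding cardI by (simp add: sum_distrib_right)
    finally show ?thesis .
  qed
  show ?thesis using charged paid assigned by simp
qed

end
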